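(* Let $f:\mathbb{R}^2\to\mathbb{R}$ be a $C^\infty$ function that vanishes on the Hawaiian earring \[ \mathcal H=\bigcup_{n\ge1} C_n, \qquad C_n=\left\{(x,y)\in\mathbb{R}^2:\left(x-\tfrac1n\right)^2+y^2=\tfrac1{n^2}\right\}. \] Then $f$ is flat at the origin, i.e. \[ \frac{\partial^{\alpha_1+\alpha_2} f}{\partial x_1^{\alpha_1}\partial x_2^{\alpha_2}}(0,0)=0 \qquad \text{for all } (\alpha_1,\alpha_2)\in\mathbb{N}^2. \] *)

theory Defs
  imports "HOL-Analysis.Analysis"
begin

definition partial_x :: "(real \<times> real \<Rightarrow> real) \<Rightarrow> real \<times> real \<Rightarrow> real" where
  "partial_x g = (\<lambda>(x, y). deriv (\<lambda>t. g (t, y)) x)"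

definition partial_y :: "(real \<times> real \<Rightarrow> real) \<Rightarrow> real \<times> real \<Rightarrow> real" where
  "partial_y g = (\<lambda>(x, y). deriv (\<lambda>t. g (x, t)) y)"

text \<open>Iterated partial derivative along a word of directions (False = x, True = y),
  applied right to left.\<close>
fun iter_partial :: "bool list \<Rightarrow> (real \<times> real \<Rightarrow> real) \<Rightarrow> real \<times> real \<Rightarrow> real" where
  "iter_partial [] g = g"
| "iter_partial (d # ds) g = (if d then partial_y else partial_x) (iter_partial ds g)"

definition smooth_R2 :: "(real \<times> real \<Rightarrow> real) \<Rightarrow> bool" where
  "smooth_R2 f \<longleftrightarrow>
     (\<forall>ds. continuous_on UNIV (iter_partial ds f) \<and>
       (\<forall>x y. (\<lambda>t. iter_partial ds f (t, y)) differentiable (at x) \<and>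
              (\<lambda>t. iter_partial ds f (x, t)) differentiable (at y)))"

definition hawaiian_earring :: "(real \<times> real) set" where
  "hawaiian_earring =
     (\<Union>n\<in>{1::nat..}. {(x, y). (x - 1 / real n)^2 + y^2 = 1 / (real n)^2})"

end

theory Submission
  imports Defs
begin

definition DD :: "(real \<times> real \<Rightarrow> real) \<Rightarrow> nat \<Rightarrow> nat \<Rightarrow> real \<times> real \<Rightarrow> real" where
  "DD f i j = iter_partial (replicate i False @ replicate j True) f"

lemma iter_partial_append: "iter_partial (xs @ ys) g = iter_partial xs (iter_partial ys g)"
  by (induction xs) auto

lemma powy: "(partial_y ^^ j) f = iter_partial (replicate j True) f"
  by (induction j) auto

lemma powx: "(partial_x ^^ i) g = iter_partial (replicate i False) g"
  by (induction i) auto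

lemma DD_eq: "(partial_x ^^ i) ((partial_y ^^ j) f) = DD f i j"
  by (simp add: DD_def powx powy iter_partial_append)

lemma DD_Suc_x: "DD f (Suc i) j = partial_x (DD f i j)"
  by (simp add: DD_def)

lemma DD_Suc_y: "DD f 0 (Suc j) = partial_y (DD f 0 j)"
  by (simp add: DD_def)

lemma has_y:
  assumes "smooth_R2 f"
  shows "((\<lambda>t. iter_partial ds f (x,t)) has_real_derivative partial_y (iter_partial ds f) (x,t)) (at t)"
proof -
  have "(\<lambda>t. iter_partial ds f (x,t)) differentiable (at t)"
    using assms unfolding smooth_R2_def by blast
  then show ?thesis unfolding partial_y_def
    by (simp add: DERIV_deriv_iff_real_differentiable)
qed

lemma has_x:
  assumes "smooth_R2 f"
  shows "((\<lambda>t. iter_partial ds f (t,y)) has_real_derivative partial_x (iter_partial ds f) (t,y)) (at t)"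
proof -
  have "(\<lambda>t. iter_partial ds f (t,y)) differentiable (at t)"
    using assms unfolding smooth_R2_def by blast
  then show ?thesis unfolding partial_x_def
    by (simp add: DERIV_deriv_iff_real_differentiable)
qed

lemma bound_box:
  assumes "continuous_on UNIV (g :: real \<times> real \<Rightarrow> real)"
  shows "\<exists>B\<ge>0. \<forall>a b. \<bar>a\<bar> \<le> 1 \<longrightarrow> \<bar>b\<bar> \<le> 1 \<longrightarrow> \<bar>g (a,b)\<bar> \<le> B"
proof -
  have "compact ({-1..1::real} \<times> {-1..1::real})"
    by (intro compact_Times) auto
  then have "compact (g ` ({-1..1} \<times> {-1..1}))"
    using assms by (meson compact_continuous_image continuous_on_subset subset_UNIV)
  then have "bounded (g ` ({-1..1} \<times> {-1..1}))" by (rule compact_imp_bounded)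
  then obtain B where B: "B > 0" "\<forall>z\<in>g ` ({-1..1} \<times> {-1..1}). norm z \<le> B"
    using bounded_pos by blast
  show ?thesis
  proof (intro exI[of _ B] conjI allI impI)
    fix a b :: real assume "\<bar>a\<bar> \<le> 1" "\<bar>b\<bar> \<le> 1"
    then have "(a,b) \<in> {-1..1} \<times> {-1..1}" by auto
    then show "\<bar>g (a,b)\<bar> \<le> B" using B by force
  qed (use B in auto)
qed

lemma DD_bound:
  assumes "smooth_R2 f"
  shows "\<exists>B\<ge>0. \<forall>a b. \<bar>a\<bar> \<le> 1 \<longrightarrow> \<bar>b\<bar> \<le> 1 \<longrightarrow> \<bar>DD f i j (a,b)\<bar> \<le> B"
  using assms unfolding smooth_R2_def DD_def by (intro bound_box) blast

lemma abs_div_fact: "\<bar>a\<bar> \<le> (B::real) \<Longrightarrow> \<bar>a / fact K\<bar> \<le> B"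
proof -
  assume a: "\<bar>a\<bar> \<le> B"
  have "\<bar>a / fact K\<bar> = \<bar>a\<bar> / fact K" by (simp add: abs_divide)
  also have "\<dots> \<le> \<bar>a\<bar> / 1" by (rule divide_left_mono) auto
  finally show ?thesis using a by simp
qed

lemma xtaylor:
  assumes sm: "smooth_R2 f" and IH: "\<forall>i j. i + j < d \<longrightarrow> DD f i j (0,0) = 0" and jd: "j \<le> d"
  shows "\<exists>C\<ge>0. \<forall>s. \<bar>s\<bar> \<le> 1 \<longrightarrow>
    \<bar>DD f 0 j (s,0) - DD f (d-j) j (0,0) / fact (d-j) * s^(d-j)\<bar> \<le> C * \<bar>s\<bar>^(Suc d - j)"
proof -
  obtain B where B: "B \<ge> 0" "\<forall>a b. \<bar>a\<bar> \<le> 1 \<longrightarrow> \<bar>b\<bar> \<le> 1 \<longrightarrow> \<bar>DD f (Suc d - j) j (a,b)\<bar> \<le> B"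
    using DD_bound[OF sm] by blast
  show ?thesis
  proof (intro exI[of _ B] conjI allI impI)
    show "B \<ge> 0" by fact
    fix s :: real assume s: "\<bar>s\<bar> \<le> 1"
    have der: "\<forall>m x. ((\<lambda>u. DD f m j (u,0)) has_real_derivative DD f (Suc m) j (x,0)) (at x)"
    proof (intro allI)
      fix m x
      show "((\<lambda>u. DD f m j (u,0)) has_real_derivative DD f (Suc m) j (x,0)) (at x)"
        unfolding DD_Suc_x unfolding DD_def by (rule has_x[OF sm])
    qed
    obtain t where t: "\<bar>t\<bar> \<le> \<bar>s\<bar>"
      "DD f 0 j (s,0) = (\<Sum>m<Suc d - j. DD f m j (0,0) / fact m * s^m)
         + DD f (Suc d - j) j (t,0) / fact (Suc d - j) * s^(Suc d - j)"
      using Maclaurin_all_le[of "\<lambda>m u. DD f m j (u,0)" "\<lambda>u. DD f 0 j (u,0)", OF refl der] by blast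
    have e: "Suc d - j = Suc (d - j)" using jd by simp
    have z: "(\<Sum>m<d - j. DD f m j (0,0) / fact m * s^m) = 0"
      by (rule sum.neutral) (use IH in auto)
    have sum: "(\<Sum>m<Suc d - j. DD f m j (0,0) / fact m * s^m) = DD f (d-j) j (0,0) / fact (d-j) * s^(d-j)"
      unfolding e sum.lessThan_Suc z by simp
    have "\<bar>DD f (Suc d - j) j (t,0)\<bar> \<le> B" using B t s by auto
    then have "\<bar>DD f (Suc d - j) j (t,0) / fact (Suc d - j)\<bar> \<le> B"
      by (rule abs_div_fact)
    then have "\<bar>DD f (Suc d - j) j (t,0) / fact (Suc d - j) * s^(Suc d - j)\<bar> \<le> B * \<bar>s\<bar>^(Suc d - j)"
      unfolding abs_mult power_abs by (rule mult_right_mono) auto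
    then show "\<bar>DD f 0 j (s,0) - DD f (d-j) j (0,0) / fact (d-j) * s^(d-j)\<bar> \<le> B * \<bar>s\<bar>^(Suc d - j)"
      using t(2) sum by simp
  qed
qed

lemma ytaylor:
  assumes sm: "smooth_R2 f"
  shows "\<exists>C\<ge>0. \<forall>x t. \<bar>x\<bar> \<le> 1 \<longrightarrow> \<bar>t\<bar> \<le> 1 \<longrightarrow>
    \<bar>f (x,t) - (\<Sum>j<K. DD f 0 j (x,0) / fact j * t^j)\<bar> \<le> C * \<bar>t\<bar>^K"
proof -
  obtain B where B: "B \<ge> 0" "\<forall>a b. \<bar>a\<bar> \<le> 1 \<longrightarrow> \<bar>b\<bar> \<le> 1 \<longrightarrow> \<bar>DD f 0 K (a,b)\<bar> \<le> B"
    using DD_bound[OF sm] by blast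
  show ?thesis
  proof (intro exI[of _ B] conjI allI impI)
    show "B \<ge> 0" by fact
    fix x t :: real assume x: "\<bar>x\<bar> \<le> 1" and tt: "\<bar>t\<bar> \<le> 1"
    have der: "\<forall>m u. ((\<lambda>u. DD f 0 m (x,u)) has_real_derivative DD f 0 (Suc m) (x,u)) (at u)"
    proof (intro allI)
      fix m u
      show "((\<lambda>u. DD f 0 m (x,u)) has_real_derivative DD f 0 (Suc m) (x,u)) (at u)"
        unfolding DD_Suc_y unfolding DD_def by (rule has_y[OF sm])
    qed
    have f0: "(\<lambda>u. DD f 0 0 (x,u)) = (\<lambda>u. f (x,u))" by (simp add: DD_def)
    obtain r where r: "\<bar>r\<bar> \<le> \<bar>t\<bar>"
      "f (x,t) = (\<Sum>m<K. DD f 0 m (x,0) / fact m * t^m)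
         + DD f 0 K (x,r) / fact K * t^K"
      using Maclaurin_all_le[of "\<lambda>m u. DD f 0 m (x,u)" "\<lambda>u. f (x,u)", OF f0 der] by blast
    have "\<bar>DD f 0 K (x,r)\<bar> \<le> B" using B r x tt by auto
    then have "\<bar>DD f 0 K (x,r) / fact K\<bar> \<le> B"
      by (rule abs_div_fact)
    then have "\<bar>DD f 0 K (x,r) / fact K * t^K\<bar> \<le> B * \<bar>t\<bar>^K"
      unfolding abs_mult power_abs by (rule mult_right_mono) auto
    then show "\<bar>f (x,t) - (\<Sum>j<K. DD f 0 j (x,0) / fact j * t^j)\<bar> \<le> B * \<bar>t\<bar>^K"
      using r(2) by simp
  qed
qed

lemma circ: assumes "(n::real) > 0" shows "(2/(1+y^2)/n - 1/n)^2 + (2/(1+y^2)/n*y)^2 = 1/n^2"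
proof -
  define a where "a = 1 + y^2"
  have a: "a > 0" unfolding a_def by (simp add: add_pos_nonneg)
  have y2: "y^2 = a - 1" unfolding a_def by simp
  have "(2/a/n - 1/n)^2 + (2/a/n*y)^2 = ((2 - a)^2 + 4*y^2) / (a^2*n^2)"
    using a assms by (simp add: field_simps power2_eq_square)
  also have "(2 - a)^2 + 4*y^2 = a^2" unfolding y2 by (simp add: power2_eq_square algebra_simps)
  also have "a^2 / (a^2*n^2) = 1/n^2" using a by simp
  finally show ?thesis unfolding a_def .
qed

lemma step:
  assumes sm: "smooth_R2 f" and hz: "\<forall>p\<in>hawaiian_earring. f p = 0"
    and IH: "\<forall>i j. i + j < d \<longrightarrow> DD f i j (0,0) = 0"
  shows "\<forall>j\<le>d. DD f (d-j) j (0,0) = 0"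
proof -
  have "\<forall>j. \<exists>C. j \<le> d \<longrightarrow> (\<forall>s. \<bar>s\<bar> \<le> 1 \<longrightarrow>
    \<bar>DD f 0 j (s,0) - DD f (d-j) j (0,0) / fact (d-j) * s^(d-j)\<bar> \<le> C * \<bar>s\<bar>^(Suc d - j))"
    using xtaylor[OF sm IH] by blast
  then obtain C where C: "\<And>j s. j \<le> d \<Longrightarrow> \<bar>s\<bar> \<le> 1 \<Longrightarrow>
    \<bar>DD f 0 j (s,0) - DD f (d-j) j (0,0) / fact (d-j) * s^(d-j)\<bar> \<le> C j * \<bar>s\<bar>^(Suc d - j)"
    by metis
  obtain C0 where C0: "\<And>x t. \<bar>x\<bar> \<le> 1 \<Longrightarrow> \<bar>t\<bar> \<le> 1 \<Longrightarrow>
    \<bar>f (x,t) - (\<Sum>j<Suc d. DD f 0 j (x,0) / fact j * t^j)\<bar> \<le> C0 * \<bar>t\<bar>^Suc d"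
    using ytaylor[OF sm, of "Suc d"] by blast
  define c where "c j = DD f (d-j) j (0,0) / fact (d-j) / fact j" for j
  define Q where "Q y = (\<Sum>j\<le>d. c j * y^j)" for y
  define E where "E y = C0 * \<bar>y\<bar>^Suc d + (\<Sum>j\<le>d. C j * \<bar>y\<bar>^j)" for y
  have est: "\<bar>f (s, s*y) - s^d * Q y\<bar> \<le> E y * s^Suc d"
    if s: "0 < s" "s * (1 + \<bar>y\<bar>) \<le> 1" for s y
  proof -
    have s1: "\<bar>s\<bar> \<le> 1" using s by (simp add: algebra_simps) (smt (verit) mult_nonneg_nonneg abs_ge_zero)
    have sy: "\<bar>s*y\<bar> \<le> 1" using s by (simp add: algebra_simps abs_mult)
    define T where "T = (\<Sum>j<Suc d. DD f 0 j (s,0) / fact j * (s*y)^j)"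
    have pw1: "\<bar>s*y\<bar>^Suc d = \<bar>y\<bar>^Suc d * s^Suc d" using s by (simp add: abs_mult power_mult_distrib)
    have h1: "\<bar>f (s,s*y) - T\<bar> \<le> C0 * \<bar>y\<bar>^Suc d * s^Suc d"
      using C0[OF s1 sy] unfolding pw1 T_def by (simp add: mult.assoc)
    have h2: "T - s^d * Q y = (\<Sum>j\<le>d. (DD f 0 j (s,0) - DD f (d-j) j (0,0) / fact (d-j) * s^(d-j)) / fact j * (s*y)^j)"
    proof -
      have "s^d * Q y = (\<Sum>j\<le>d. DD f (d-j) j (0,0) / fact (d-j) * s^(d-j) / fact j * (s*y)^j)"
        unfolding Q_def sum_distrib_left
      proof (rule sum.cong[OF refl])
        fix j assume "j \<in> {..d}"
        then have "s^d = s^(d-j) * s^j" by (simp add: power_add[symmetric])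
        then show "s^d * (c j * y^j) = DD f (d-j) j (0,0) / fact (d-j) * s^(d-j) / fact j * (s*y)^j"
          by (simp add: c_def power_mult_distrib mult_ac)
      qed
      then show ?thesis unfolding T_def lessThan_Suc_atMost
        by (simp add: sum_subtractf[symmetric] diff_divide_distrib left_diff_distrib)
    qed
    have h3: "\<bar>T - s^d * Q y\<bar> \<le> (\<Sum>j\<le>d. C j * \<bar>y\<bar>^j) * s^Suc d"
    proof -
      have "\<bar>T - s^d * Q y\<bar> \<le> (\<Sum>j\<le>d. \<bar>(DD f 0 j (s,0) - DD f (d-j) j (0,0) / fact (d-j) * s^(d-j)) / fact j * (s*y)^j\<bar>)"
        unfolding h2 by (rule sum_abs)
      also have "\<dots> \<le> (\<Sum>j\<le>d. C j * \<bar>y\<bar>^j * s^Suc d)"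
      proof (rule sum_mono)
        fix j assume j: "j \<in> {..d}"
        define A where "A = DD f 0 j (s,0) - DD f (d-j) j (0,0) / fact (d-j) * s^(d-j)"
        have "\<bar>A\<bar> \<le> C j * s^(Suc d - j)" using C[of j s] j s1 s unfolding A_def by simp
        then have a: "\<bar>A / fact j\<bar> \<le> C j * s^(Suc d - j)" by (rule abs_div_fact)
        have pw: "\<bar>(s*y)^j\<bar> = s^j * \<bar>y\<bar>^j" using s by (simp add: abs_mult power_abs power_mult_distrib)
        have "\<bar>A / fact j * (s*y)^j\<bar> \<le> C j * s^(Suc d - j) * (s^j * \<bar>y\<bar>^j)"
          unfolding abs_mult[of "A / fact j"] pw by (rule mult_right_mono[OF a]) (use s in simp)
        also have "\<dots> = C j * \<bar>y\<bar>^j * (s^(Suc d - j) * s^j)" by (simp add: mult_ac)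
        also have "s^(Suc d - j) * s^j = s^Suc d" using j by (simp add: power_add[symmetric])
        finally show "\<bar>(DD f 0 j (s,0) - DD f (d-j) j (0,0) / fact (d-j) * s^(d-j)) / fact j * (s*y)^j\<bar> \<le> C j * \<bar>y\<bar>^j * s^Suc d"
          unfolding A_def .
      qed
      also have "\<dots> = (\<Sum>j\<le>d. C j * \<bar>y\<bar>^j) * s^Suc d" by (simp add: sum_distrib_right)
      finally show ?thesis .
    qed
    have "\<bar>f (s, s*y) - s^d * Q y\<bar> \<le> \<bar>f (s,s*y) - T\<bar> + \<bar>T - s^d * Q y\<bar>" by linarith
    also have "\<dots> \<le> C0 * \<bar>y\<bar>^Suc d * s^Suc d + (\<Sum>j\<le>d. C j * \<bar>y\<bar>^j) * s^Suc d"
      using h1 h3 by linarith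
    also have "\<dots> = E y * s^Suc d" by (simp add: E_def distrib_right)
    finally show ?thesis .
  qed
  have Qz: "Q y = 0" for y
  proof -
    define sn where "sn n = (2/(1+y^2)) / real n" for n
    have lim: "sn \<longlonglongrightarrow> 0" unfolding sn_def by (rule lim_const_over_n)
    have pos: "1 + y^2 > 0" by (simp add: add_pos_nonneg)
    have ev1: "eventually (\<lambda>n. sn n < 1/(1+\<bar>y\<bar>)) sequentially"
      using lim by (rule order_tendstoD) simp
    have ev2: "eventually (\<lambda>n. n \<ge> 1) sequentially" by (rule eventually_ge_at_top)
    have ev: "eventually (\<lambda>n. \<bar>Q y\<bar> \<le> E y * sn n) sequentially"
      using ev1 ev2
    proof eventually_elim
      case (elim n)
      have sp: "sn n > 0" using elim pos by (simp add: sn_def)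
      have s1: "sn n * (1+\<bar>y\<bar>) \<le> 1" using elim(1)
        by (simp add: less_divide_eq add_pos_nonneg less_imp_le)
      have "(sn n - 1/real n)^2 + (sn n*y)^2 = 1/(real n)^2"
        unfolding sn_def using elim(2) by (intro circ) simp
      then have on: "(sn n, sn n * y) \<in> hawaiian_earring"
        using elim(2) by (auto simp: hawaiian_earring_def intro!: bexI[of _ n])
      then have fz: "f (sn n, sn n * y) = 0" using hz by blast
      have "\<bar>sn n ^ d * Q y\<bar> \<le> E y * sn n ^ Suc d" using est[OF sp s1] fz by simp
      then have "sn n^d * \<bar>Q y\<bar> \<le> sn n^d * (E y * sn n)" using sp by (simp add: abs_mult mult_ac)
      then show "\<bar>Q y\<bar> \<le> E y * sn n" using sp by (simp add: mult_le_cancel_left_pos)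
    qed
    have "(\<lambda>n. E y * sn n) \<longlonglongrightarrow> 0" using tendsto_mult[OF tendsto_const lim, of "E y"] by simp
    then have "\<bar>Q y\<bar> \<le> 0" using ev by (rule tendsto_le[OF trivial_limit_sequentially _ tendsto_const])
    then show ?thesis by simp
  qed
  then have "\<forall>j\<le>d. c j = 0" using polyfun_eq_0[of c d] unfolding Q_def by blast
  then show ?thesis by (simp add: c_def)
qed

theorem theorem4:
  fixes f :: "real \<times> real \<Rightarrow> real"
  assumes "smooth_R2 f"
    and "\<forall>p\<in>hawaiian_earring. f p = 0"
  shows "\<forall>a1 a2 :: nat. (partial_x ^^ a1) ((partial_y ^^ a2) f) (0, 0) = 0"
proof -
  have all: "\<forall>i j. i + j = d \<longrightarrow> DD f i j (0,0) = 0" for d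
  proof (induction d rule: less_induct)
    case (less d)
    then have IH: "\<forall>i j. i + j < d \<longrightarrow> DD f i j (0,0) = 0" by blast
    show ?case
    proof (intro allI impI)
      fix i j assume h: "i + j = d"
      then have "j \<le> d" "d - j = i" by auto
      then show "DD f i j (0,0) = 0" using step[OF assms IH] by metis
    qed
  qed
  show ?thesis using all by (simp add: DD_eq)
qed

end
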